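(* Let $G$ be a connected threshold graph of order $n\ge 4$ and size $m$ with $n-1<m<\binom{n}{2}$, with $c$ type 1 vertices, backwards zero position sequence $(b_1,\ldots,b_z)$ and $F_1=\sum_{i=1}^z b_i^2$. Let $\xi\in\mathbb{R}$ be the greatest real root of \[P(x)=x^3-(c+1)x^2+\Big(c-\sum_{i=1}^z b_i\Big)x+\Big(c\sum_{i=1}^z b_i-F_1\Big).\] Then $\xi$ is a simple root of $P$ and $|\xi|>|\eta|$ for every other root $\eta$ of $P$.
   Context: A threshold graph is a simple graph whose vertices can be ordered $v_1,\ldots,v_n$ so that for each $2\le i\le n$, $v_i$ is either adjacent to all of $v_1,\ldots,v_{i-1}$ (then $a_i=1$) or to none of them (then $a_i=0$); by convention $a_1=1$. Vertex $v_i$ is of type 1 if $a_i=1$ and of type 0 if $a_i=0$; $c$ and $z$ are the numbers of type 1 and type 0 vertices (here $c\ge 3$, $z\ge 1$). The backwards zero position sequence $(b_1,\ldots,b_z)$ is defined by letting $b_i$ be the number of type 1 vertices appearing after the $i$-th type 0 vertex in the order $v_1,\ldots,v_n$; one has $1\le b_i\le c-1$. *)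

theory Defs
  imports Complex_Main "HOL-Computational_Algebra.Polynomial"
begin

text \<open>A threshold graph on vertices 1..n given by its creation sequence a_1..a_n
  (a i = True means type 1). For i < j, v_i and v_j are adjacent iff a j.\<close>

definition thr_adj :: "(nat \<Rightarrow> bool) \<Rightarrow> nat \<Rightarrow> nat \<Rightarrow> nat \<Rightarrow> bool" where
  "thr_adj a n u v \<longleftrightarrow> u \<in> {1..n} \<and> v \<in> {1..n} \<and> u \<noteq> v \<and> a (max u v)"

definition thr_edges :: "(nat \<Rightarrow> bool) \<Rightarrow> nat \<Rightarrow> nat set set" where
  "thr_edges a n = {{u, v} | u v. thr_adj a n u v}"

definition thr_size :: "(nat \<Rightarrow> bool) \<Rightarrow> nat \<Rightarrow> nat" where
  "thr_size a n = card (thr_edges a n)"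

definition thr_connected :: "(nat \<Rightarrow> bool) \<Rightarrow> nat \<Rightarrow> bool" where
  "thr_connected a n \<longleftrightarrow> (\<forall>u\<in>{1..n}. \<forall>v\<in>{1..n}. (thr_adj a n)\<^sup>*\<^sup>* u v)"

definition thr_c :: "(nat \<Rightarrow> bool) \<Rightarrow> nat \<Rightarrow> nat" where
  "thr_c a n = card {i \<in> {1..n}. a i}"

definition thr_bseq :: "(nat \<Rightarrow> bool) \<Rightarrow> nat \<Rightarrow> nat list" where
  "thr_bseq a n = map (\<lambda>p. card {j \<in> {p<..n}. a j}) (filter (\<lambda>p. \<not> a p) [1..<n+1])"

definition thr_F1 :: "(nat \<Rightarrow> bool) \<Rightarrow> nat \<Rightarrow> nat" where
  "thr_F1 a n = sum_list (map (\<lambda>b. b ^ 2) (thr_bseq a n))"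

definition thr_P :: "(nat \<Rightarrow> bool) \<Rightarrow> nat \<Rightarrow> real poly" where
  "thr_P a n = (let c = real (thr_c a n); S = real (sum_list (thr_bseq a n));
                    F = real (thr_F1 a n)
                in [: c * S - F, c - S, - (c + 1), 1 :])"

end

theory Submission
  imports Defs
begin


lemma coef_rel:
  fixes d0 d1 d2 r s :: real
  assumes "r \<noteq> s" "d0 + r*(d1 + r*(d2 + r)) = 0" "d0 + s*(d1 + s*(d2 + s)) = 0"
  shows "d1 = (-d2-r-s)*r + (-d2-r-s)*s + r*s" "d0 = -((-d2-r-s)*r*s)"
proof -
  have "(r - s) * (r^2 + r*s + s^2 + d2*(r+s) + d1) = 0"
    using assms(2,3) by (simp add: algebra_simps power2_eq_square)
  then have h: "r^2 + r*s + s^2 + d2*(r+s) + d1 = 0" using assms(1) by simp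
  show "d1 = (-d2-r-s)*r + (-d2-r-s)*s + r*s" using h by (simp add: algebra_simps power2_eq_square)
  have d1e: "d1 = -(r*r+r*s+s*s) - d2*(r+s)" using h by (simp add: algebra_simps power2_eq_square)
  have "d0 = -r*(d1 + r*(d2+r))" using assms(2) by (simp add: algebra_simps)
  also have "... = -((-d2-r-s)*r*s)" unfolding d1e by (simp add: algebra_simps)
  finally show "d0 = -((-d2-r-s)*r*s)" .
qed

lemma cubic_main:
  fixes c S F \<xi> :: real and P :: "real poly"
  assumes S: "S \<ge> 0" and F: "F > 0" and K: "c*S - F > 0"
    and P: "P = [: c*S-F, c-S, -(c+1), 1:]"
    and root: "poly P \<xi> = 0" and grt: "\<forall>x. poly P x = 0 \<longrightarrow> x \<le> \<xi>"
  shows "order \<xi> P = 1 \<and>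
         (\<forall>\<eta>::complex. poly (map_poly of_real P) \<eta> = 0 \<and> \<eta> \<noteq> of_real \<xi>
              \<longrightarrow> cmod \<eta> < \<bar>\<xi>\<bar>)"
proof -
  have pe: "poly P x = (c*S-F) + x*((c-S) + x*(-(c+1) + x))" for x using P by simp
  have c0: "c > 0" using S F K by (smt (verit) mult_nonneg_nonpos2 mult_nonpos_nonneg)
  have "poly P 0 > 0" using pe K by simp
  moreover have "poly P c < 0" using pe[of c] F by (simp add: algebra_simps)
  ultimately obtain r2 where r2: "0 < r2" "r2 < c" "poly P r2 = 0" using poly_IVT_neg c0 by blast
  define L where "L = c + 1 + S"
  have "poly P L = S*L*(L-1) + c*L + (c*S-F)" unfolding pe L_def by (simp add: algebra_simps)
  moreover have "S*L*(L-1) \<ge> 0" using S c0 unfolding L_def by simp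
  ultimately have "poly P L > 0" using K c0 L_def S by (smt (verit) mult_pos_pos)
  moreover have "c < L" using L_def S by simp
  ultimately obtain r3 where r3: "c < r3" "r3 < L" "poly P r3 = 0"
    using poly_IVT_pos \<open>poly P c < 0\<close> by blast
  define t where "t = (c+1) - r2 - r3"
  have h2: "c*S-F + r2*((c-S) + r2*(-(c+1)+r2)) = 0" using pe[of r2] r2 by simp
  have h3: "c*S-F + r3*((c-S) + r3*(-(c+1)+r3)) = 0" using pe[of r3] r3 by simp
  have tt: "t = -(-(c+1)) - r2 - r3" unfolding t_def by simp
  have "r2 \<noteq> r3" using r2 r3 by simp
  note cr0 = coef_rel[OF this h2 h3, folded tt]
  have cr: "c - S = t*r2 + t*r3 + r2*r3" "c*S - F = -(t*r2*r3)" using cr0 by simp_all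
  have fact: "poly P x = (x - t)*(x - r2)*(x - r3)" for x
    unfolding pe cr t_def by (simp add: algebra_simps)
  have t0: "t < 0"
  proof -
    have "t*(r2*r3) < 0" using cr K by (simp add: algebra_simps)
    moreover have "r2*r3 > 0" using r2 r3 c0 by simp
    ultimately show ?thesis by (smt (verit) mult_nonneg_nonneg)
  qed
  have tr3: "-t < r3" using t_def r2 by simp
  have xi: "\<xi> = r3"
  proof -
    have "r3 \<le> \<xi>" using grt r3 by blast
    moreover have "\<xi> = t \<or> \<xi> = r2 \<or> \<xi> = r3" using root fact[of \<xi>] by simp
    ultimately show ?thesis using t0 r2 r3 by auto
  qed
  have Peq: "P = [:-r3,1:] * ([:-t,1:] * [:-r2,1:])"
    by (rule poly_eq_poly_eq_iff[THEN iffD1]) (auto simp: fact algebra_simps)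
  have "order r3 P = 1"
  proof -
    have nz: "[:-t,1:] * [:-r2,1:] \<noteq> (0::real poly)" by simp
    have "order r3 ([:-t,1:] * [:-r2,1:]) = 0"
    proof (rule order_0I)
      have "poly ([:-t,1:] * [:-r2,1:]) r3 = (r3-t)*(r3-r2)" by (simp add: algebra_simps)
      moreover have "(r3-t)*(r3-r2) > 0" using t0 r2 r3 by simp
      ultimately show "poly ([:-t,1:] * [:-r2,1:]) r3 \<noteq> 0" by linarith
    qed
    moreover have "order r3 [:-r3,1:] = 1" using order_power_n_n[of r3 1] by simp
    ultimately show ?thesis unfolding Peq by (subst order_mult) (use nz in auto)
  qed
  moreover have "cmod \<eta> < \<bar>\<xi>\<bar>" if h: "poly (map_poly of_real P) \<eta> = 0" "\<eta> \<noteq> of_real \<xi>" for \<eta>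
  proof -
    have "poly (map_poly of_real P) \<eta> = (\<eta> - of_real t)*(\<eta> - of_real r2)*(\<eta> - of_real r3)"
      unfolding Peq by (simp add: map_poly_pCons algebra_simps)
    hence "\<eta> = of_real t \<or> \<eta> = of_real r2" using h xi by auto
    thus ?thesis using xi t0 tr3 r2 r3 by auto
  qed
  ultimately show ?thesis using xi by blast
qed


lemma a_n: assumes "thr_connected a n" "n \<ge> 2" shows "a n"
proof (rule ccontr)
  assume na: "\<not> a n"
  have "(thr_adj a n)\<^sup>*\<^sup>* n 1" using assms unfolding thr_connected_def by auto
  then show False
  proof (cases rule: converse_rtranclpE)
    case base then show ?thesis using assms by simp
  next
    case (step y) then show ?thesis using na unfolding thr_adj_def by (auto simp: max_def)
  qed
qed

lemma bseq_bounds: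
  assumes "a 1" "a n" "n \<ge> 1" "b \<in> set (thr_bseq a n)"
  shows "1 \<le> b \<and> b < thr_c a n"
proof -
  obtain p where pin: "p \<in> set (filter (\<lambda>p. \<not> a p) [1..<n+1])" and b: "b = card {j \<in> {p<..n}. a j}"
    using assms(4) unfolding thr_bseq_def set_map by blast
  have p: "p \<in> {1..n}" "\<not> a p" using pin by auto
  have pn: "p < n" using p assms(2) by (cases "p = n") auto
  have "n \<in> {j \<in> {p<..n}. a j}" using pn assms(2) by auto
  moreover have "finite {j \<in> {p<..n}. a j}" by simp
  ultimately have "card {j \<in> {p<..n}. a j} > 0" using card_gt_0_iff by blast
  hence "card {j \<in> {p<..n}. a j} \<ge> 1" by simp
  moreover have "card {j \<in> {p<..n}. a j} < card {i \<in> {1..n}. a i}"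
  proof (rule psubset_card_mono)
    show "finite {i \<in> {1..n}. a i}" by simp
    have "1 \<in> {i \<in> {1..n}. a i}" "1 \<notin> {j \<in> {p<..n}. a j}" using assms p by auto
    moreover have "{j \<in> {p<..n}. a j} \<subseteq> {i \<in> {1..n}. a i}" using p by auto
    ultimately show "{j \<in> {p<..n}. a j} \<subset> {i \<in> {1..n}. a i}" by blast
  qed
  ultimately show ?thesis using b unfolding thr_c_def by simp
qed

lemma bseq_ne:
  assumes "thr_size a n < n choose 2"
  shows "thr_bseq a n \<noteq> []"
proof
  assume "thr_bseq a n = []"
  hence all: "\<forall>p\<in>{1..n}. a p" unfolding thr_bseq_def by (auto simp: filter_empty_conv)
  have "thr_edges a n = {B. B \<subseteq> {1..n} \<and> card B = 2}"
  proof (intro set_eqI iffI)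
    fix B assume "B \<in> thr_edges a n"
    then obtain u v where "B = {u,v}" "thr_adj a n u v" unfolding thr_edges_def by auto
    thus "B \<in> {B. B \<subseteq> {1..n} \<and> card B = 2}" unfolding thr_adj_def by auto
  next
    fix B assume "B \<in> {B. B \<subseteq> {1..n} \<and> card B = 2}"
    hence Bs: "B \<subseteq> {1..n}" "card B = 2" by auto
    then obtain u v where uv: "B = {u,v}" "u \<noteq> v" by (meson card_2_iff)
    hence "u \<in> {1..n}" "v \<in> {1..n}" using Bs(1) by auto
    note uv this
    moreover have "a (max u v)" using all calculation by (simp add: max_def)
    ultimately show "B \<in> thr_edges a n" unfolding thr_edges_def thr_adj_def by blast
  qed
  hence "thr_size a n = n choose 2" unfolding thr_size_def by (simp add: n_subsets)
  thus False using assms by simp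
qed

lemma list_ineq:
  fixes xs :: "nat list"
  assumes "\<forall>b\<in>set xs. 1 \<le> b \<and> b < c" "xs \<noteq> []"
  shows "sum_list (map (\<lambda>b. b^2) xs) < c * sum_list xs \<and> 0 < sum_list (map (\<lambda>b. b^2) xs)"
  using assms
proof (induction xs)
  case Nil then show ?case by simp
next
  case (Cons x xs)
  have x: "x^2 < c * x" "0 < x^2" using Cons.prems by (auto simp: power2_eq_square)
  show ?case
  proof (cases "xs = []")
    case True then show ?thesis using x by simp
  next
    case False
    then have "sum_list (map (\<lambda>b. b^2) xs) < c * sum_list xs" using Cons by auto
    then show ?thesis using x by (simp add: algebra_simps)
  qed
qed

theorem lemma5p4:
  fixes a :: "nat \<Rightarrow> bool" and n :: nat and \<xi> :: real
  assumes "a 1"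
    and "n \<ge> 4"
    and "thr_connected a n"
    and "n - 1 < thr_size a n"
    and "thr_size a n < n choose 2"
    and "poly (thr_P a n) \<xi> = 0"
    and "\<forall>x::real. poly (thr_P a n) x = 0 \<longrightarrow> x \<le> \<xi>"
  shows "order \<xi> (thr_P a n) = 1 \<and>
         (\<forall>\<eta>::complex. poly (map_poly of_real (thr_P a n)) \<eta> = 0 \<and> \<eta> \<noteq> of_real \<xi>
              \<longrightarrow> cmod \<eta> < \<bar>\<xi>\<bar>)"
proof -
  have an: "a n" using a_n[OF assms(3)] assms(2) by simp
  have bb: "\<forall>b\<in>set (thr_bseq a n). 1 \<le> b \<and> b < thr_c a n"
    using bseq_bounds[OF assms(1) an] assms(2) by simp
  have ne: "thr_bseq a n \<noteq> []" using bseq_ne assms(5) by blast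
  note li = list_ineq[OF bb ne]
  define c where "c = real (thr_c a n)"
  define S where "S = real (sum_list (thr_bseq a n))"
  define F where "F = real (thr_F1 a n)"
  have F: "F > 0" using li unfolding F_def thr_F1_def by simp
  have "thr_F1 a n < thr_c a n * sum_list (thr_bseq a n)" using li unfolding thr_F1_def by simp
  hence "F < c * S" unfolding F_def c_def S_def by (metis of_nat_less_iff of_nat_mult)
  hence K: "c*S - F > 0" by simp
  have S: "S \<ge> 0" unfolding S_def by simp
  have P: "thr_P a n = [: c*S-F, c-S, -(c+1), 1:]" unfolding thr_P_def c_def S_def F_def Let_def by simp
  show ?thesis using cubic_main[OF S F K P assms(6,7)] .
qed

end
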